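(* Let $A\subseteq\mathbb{R}^d$ be open, let $g:\mathbb{R}^d\to A$ be Lipschitz with constant $L_g$, and let $f:A\to\mathbb{R}^m$ be intrinsic Lipschitz (on $A$) with constant $L_f$. Then $f\circ g$ is intrinsic Lipschitz with constant $L_fL_g$.
   Context: Length of a continuous curve: $\ell(\gamma)=\sup\sum_{k}\|\gamma(t_k)-\gamma(t_{k-1})\|$ over partitions of $[0,1]$. Intrinsic metric on a set $S\subseteq\mathbb{R}^d$: $\rho(x,y)=\inf\{\ell(\gamma):\gamma:[0,1]\to S\text{ continuous from }x\text{ to }y\}$ ($\infty$ if no such curve). A map $h:S\to\mathbb{R}^m$ is intrinsic Lipschitz with constant $L$ if $\|h(x)-h(y)\|\le L\rho(x,y)$ for all $x,y\in S$. *)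

theory Defs
  imports "HOL-Analysis.Analysis"
begin

definition curve_length :: "(real \<Rightarrow> 'a::real_normed_vector) \<Rightarrow> ereal" where
  "curve_length \<gamma> =
     (SUP p \<in> {(n, t). t 0 = 0 \<and> t n = 1 \<and> (\<forall>k<n. t k \<le> t (Suc k))}.
        ereal (\<Sum>k\<in>{1..fst p}. norm (\<gamma> (snd p k) - \<gamma> (snd p (k - 1)))))"

text \<open>Intrinsic metric on S; the infimum over the empty set is \<infinity>.\<close>
definition intrinsic_dist :: "'a::real_normed_vector set \<Rightarrow> 'a \<Rightarrow> 'a \<Rightarrow> ereal" where
  "intrinsic_dist S x y =
     (INF \<gamma> \<in> {\<gamma>. continuous_on {0..1} \<gamma> \<and> \<gamma> ` {0..1} \<subseteq> S \<and> \<gamma> 0 = x \<and> \<gamma> 1 = y}.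
        curve_length \<gamma>)"

definition intrinsic_lipschitz ::
    "real \<Rightarrow> 'a::real_normed_vector set \<Rightarrow> ('a \<Rightarrow> 'b::real_normed_vector) \<Rightarrow> bool" where
  "intrinsic_lipschitz L S h \<longleftrightarrow>
     (\<forall>x\<in>S. \<forall>y\<in>S. intrinsic_dist S x y \<noteq> \<infinity> \<longrightarrow>
        ereal (norm (h x - h y)) \<le> ereal L * intrinsic_dist S x y)"

end

theory Submission
  imports Defs
begin

lemma part_mono:
  fixes t :: "nat \<Rightarrow> real"
  assumes "\<forall>k<n. t k \<le> t (Suc k)"
  shows "i \<le> j \<Longrightarrow> j \<le> n \<Longrightarrow> t i \<le> t j"
proof (induction j)
  case 0 then show ?case by simp
next
  case (Suc j)
  show ?case
  proof (cases "i = Suc j")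
    case True then show ?thesis by simp
  next
    case False
    then have "t i \<le> t j" using Suc by simp
    also have "\<dots> \<le> t (Suc j)" using assms Suc.prems by simp
    finally show ?thesis .
  qed
qed

lemma part_in01:
  fixes t :: "nat \<Rightarrow> real"
  assumes "t 0 = 0" "t n = 1" "\<forall>k<n. t k \<le> t (Suc k)" "k \<le> n"
  shows "t k \<in> {0..1}"
  using part_mono[OF assms(3), of 0 k] part_mono[OF assms(3), of k n] assms by auto

lemma cl_upper:
  fixes t :: "nat \<Rightarrow> real"
  assumes "t 0 = 0" "t n = 1" "\<forall>k<n. t k \<le> t (Suc k)"
  shows "ereal (\<Sum>k\<in>{1..n}. norm (\<gamma> (t k) - \<gamma> (t (k - 1)))) \<le> curve_length \<gamma>"
  unfolding curve_length_def
  by (rule SUP_upper2[of "(n,t)"]) (use assms in auto)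

lemma cl_lower:
  "ereal (norm (\<gamma> 1 - \<gamma> 0)) \<le> curve_length \<gamma>"
proof -
  have "ereal (\<Sum>k\<in>{1..1}. norm (\<gamma> ((\<lambda>k::nat. if k = 0 then 0 else (1::real)) k)
          - \<gamma> ((\<lambda>k::nat. if k = 0 then 0 else (1::real)) (k - 1)))) \<le> curve_length \<gamma>"
    by (rule cl_upper) auto
  then show ?thesis by simp
qed

lemma cl_comp:
  fixes \<gamma> :: "real \<Rightarrow> 'a::real_normed_vector" and h :: "'a \<Rightarrow> 'b::real_normed_vector"
  assumes L: "0 \<le> L"
    and lip: "\<And>s u. s \<in> {0..1} \<Longrightarrow> u \<in> {0..1} \<Longrightarrow>
               norm (h (\<gamma> s) - h (\<gamma> u)) \<le> L * norm (\<gamma> s - \<gamma> u)"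
  shows "curve_length (h \<circ> \<gamma>) \<le> ereal L * curve_length \<gamma>"
  unfolding curve_length_def[of "h \<circ> \<gamma>"]
proof (rule SUP_least)
  fix p :: "nat \<times> (nat \<Rightarrow> real)" assume "p \<in> {(n, t). t 0 = 0 \<and> t n = 1 \<and> (\<forall>k<n. t k \<le> t (Suc k))}"
  then obtain n and t :: "nat \<Rightarrow> real" where p: "p = (n,t)" and t0: "t 0 = 0" and tn: "t n = 1"
    and tm: "\<forall>k<n. t k \<le> t (Suc k)" by auto
  have "(\<Sum>k\<in>{1..n}. norm ((h \<circ> \<gamma>) (t k) - (h \<circ> \<gamma>) (t (k - 1))))
      \<le> (\<Sum>k\<in>{1..n}. L * norm (\<gamma> (t k) - \<gamma> (t (k - 1))))"
  proof (rule sum_mono)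
    fix k assume k: "k \<in> {1..n}"
    have "t k \<in> {0..1}" "t (k-1) \<in> {0..1}"
      using part_in01[OF t0 tn tm] k by auto
    then show "norm ((h \<circ> \<gamma>) (t k) - (h \<circ> \<gamma>) (t (k - 1))) \<le> L * norm (\<gamma> (t k) - \<gamma> (t (k - 1)))"
      using lip by simp
  qed
  also have "\<dots> = L * (\<Sum>k\<in>{1..n}. norm (\<gamma> (t k) - \<gamma> (t (k - 1))))"
    by (simp add: sum_distrib_left)
  finally have 1: "ereal (\<Sum>k\<in>{1..n}. norm ((h \<circ> \<gamma>) (t k) - (h \<circ> \<gamma>) (t (k - 1))))
      \<le> ereal L * ereal (\<Sum>k\<in>{1..n}. norm (\<gamma> (t k) - \<gamma> (t (k - 1))))" by simp
  also have "\<dots> \<le> ereal L * curve_length \<gamma>"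
    by (rule ereal_mult_left_mono[OF cl_upper[OF t0 tn tm]]) (use L in simp)
  finally show "ereal (\<Sum>k\<in>{1..fst p}. norm ((h \<circ> \<gamma>) (snd p k) - (h \<circ> \<gamma>) (snd p (k - 1))))
      \<le> ereal L * curve_length \<gamma>" using p by simp
qed

lemma telescope:
  fixes t :: "nat \<Rightarrow> real"
  shows "(\<Sum>k\<in>{1..m}. t k - t (k - 1)) = t m - t 0"
  by (induction m) auto

lemma cl_id: "curve_length (\<lambda>s::real. s) \<le> 1"
  unfolding curve_length_def
proof (rule SUP_least)
  fix p :: "nat \<times> (nat \<Rightarrow> real)" assume "p \<in> {(n, t). t 0 = 0 \<and> t n = 1 \<and> (\<forall>k<n. t k \<le> t (Suc k))}"
  then obtain n and t :: "nat \<Rightarrow> real" where p: "p = (n,t)" and t0: "t 0 = 0" and tn: "t n = 1"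
    and tm: "\<forall>k<n. t k \<le> t (Suc k)" by auto
  have "(\<Sum>k\<in>{1..n}. norm (t k - t (k - 1))) = (\<Sum>k\<in>{1..n}. t k - t (k - 1))"
  proof (rule sum.cong)
    fix k assume "k \<in> {1..n}"
    then have "t (k-1) \<le> t k" using part_mono[OF tm, of "k-1" k] by auto
    then show "norm (t k - t (k - 1)) = t k - t (k - 1)" by simp
  qed simp
  also have "\<dots> = 1" using telescope[of t n] t0 tn by simp
  finally show "ereal (\<Sum>k\<in>{1..fst p}. norm (snd p k - snd p (k - 1))) \<le> 1"
    using p by simp
qed

lemma cl_seg:
  fixes a b :: "'a::real_normed_vector"
  shows "curve_length (\<lambda>s. a + s *\<^sub>R (b - a)) \<le> ereal (norm (b - a))"
proof -
  have "curve_length ((\<lambda>s. a + s *\<^sub>R (b - a)) \<circ> (\<lambda>s::real. s)) \<le> ereal (norm (b - a)) * curve_length (\<lambda>s::real. s)"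
  proof (rule cl_comp)
    fix s u :: real
    have "a + s *\<^sub>R (b - a) - (a + u *\<^sub>R (b - a)) = (s - u) *\<^sub>R (b - a)"
      by (simp add: algebra_simps)
    then show "norm (a + s *\<^sub>R (b - a) - (a + u *\<^sub>R (b - a))) \<le> norm (b - a) * norm (s - u)"
      by simp
  qed simp
  also have "\<dots> \<le> ereal (norm (b - a)) * 1"
    by (rule ereal_mult_left_mono[OF cl_id]) simp
  finally show ?thesis by (simp add: o_def)
qed

lemma idist_lower:
  "ereal (norm (b - a)) \<le> intrinsic_dist S a b"
  unfolding intrinsic_dist_def
  by (rule INF_greatest) (use cl_lower in auto)

lemma idist_upper:
  fixes a b :: "'a::real_normed_vector"
  assumes "closed_segment a b \<subseteq> S"
  shows "intrinsic_dist S a b \<le> ereal (norm (b - a))"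
proof -
  let ?g = "\<lambda>s::real. a + s *\<^sub>R (b - a)"
  have "?g ` {0..1} \<subseteq> closed_segment a b"
  proof (rule image_subsetI)
    fix s :: real assume "s \<in> {0..1}"
    moreover have "a + s *\<^sub>R (b - a) = (1 - s) *\<^sub>R a + s *\<^sub>R b" by (simp add: algebra_simps)
    ultimately show "a + s *\<^sub>R (b - a) \<in> closed_segment a b"
      unfolding closed_segment_def by auto
  qed
  moreover have "continuous_on {0..1} ?g" by (intro continuous_intros)
  ultimately have "intrinsic_dist S a b \<le> curve_length ?g"
    unfolding intrinsic_dist_def using assms by (intro INF_lower) auto
  also have "\<dots> \<le> ereal (norm (b - a))" by (rule cl_seg)
  finally show ?thesis .
qed

theorem lemma3p9:
  fixes A :: "'a::euclidean_space set"
    and g :: "'a \<Rightarrow> 'a"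
    and f :: "'a \<Rightarrow> 'b::euclidean_space"
    and Lf Lg :: real
  assumes "open A"
    and "range g \<subseteq> A"
    and "lipschitz_on Lg UNIV g"
    and "intrinsic_lipschitz Lf A f"
  shows "intrinsic_lipschitz (Lf * Lg) UNIV (f \<circ> g)"
proof -
  have Lg: "0 \<le> Lg" using assms(3) lipschitz_on_nonneg by blast
  have Lf: "0 \<le> Lf"
  proof (rule ccontr)
    assume neg: "\<not> 0 \<le> Lf"
    define a where "a = g 0"
    have aA: "a \<in> A" using assms(2) a_def by auto
    obtain e where e: "e > 0" "ball a e \<subseteq> A" using assms(1) aA open_contains_ball by blast
    obtain i :: 'a where i: "i \<in> Basis" using nonempty_Basis by blast
    define b where "b = a + (e/2) *\<^sub>R i"
    have nb: "norm (b - a) = e/2" using i e by (simp add: b_def)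
    have "b \<in> ball a e" using nb e by (simp add: dist_norm norm_minus_commute)
    then have "closed_segment a b \<subseteq> ball a e"
      using e by (intro closed_segment_subset) auto
    then have seg: "closed_segment a b \<subseteq> A" using e by blast
    have bA: "b \<in> A" using seg by auto
    have up: "intrinsic_dist A a b \<le> ereal (e/2)" using idist_upper[OF seg] nb by simp
    have lo: "ereal (e/2) \<le> intrinsic_dist A a b" using idist_lower[of b a A] nb by simp
    then obtain r where r: "intrinsic_dist A a b = ereal r" "r \<ge> e/2"
      using up by (cases "intrinsic_dist A a b") auto
    have "ereal (norm (f a - f b)) \<le> ereal Lf * intrinsic_dist A a b"
    proof -
      have "intrinsic_dist A a b \<noteq> \<infinity>" using r by simp
      then show ?thesis using assms(4) aA bA unfolding intrinsic_lipschitz_def by blast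
    qed
    then have "ereal (norm (f a - f b)) \<le> ereal Lf * ereal r" using r by simp
    then have "norm (f a - f b) \<le> Lf * r" using r by simp
    moreover have "Lf * r < 0" using neg r e by (simp add: mult_neg_pos)
    ultimately show False by (smt (verit) norm_ge_zero)
  qed
  show ?thesis
    unfolding intrinsic_lipschitz_def
  proof (intro ballI impI)
    fix x y :: 'a
    have rU: "intrinsic_dist UNIV x y = ereal (norm (y - x))"
      using idist_upper[of x y UNIV] idist_lower[of y x UNIV] by auto
    let ?s = "\<lambda>s::real. x + s *\<^sub>R (y - x)"
    have cg: "continuous_on UNIV g" using assms(3) lipschitz_on_continuous_on by blast
    have "continuous_on {0..1} (g \<circ> ?s)"
      by (intro continuous_on_compose continuous_intros continuous_on_subset[OF cg]) auto
    moreover have "(g \<circ> ?s) ` {0..1} \<subseteq> A" using assms(2) by auto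
    ultimately have "intrinsic_dist A (g x) (g y) \<le> curve_length (g \<circ> ?s)"
      unfolding intrinsic_dist_def by (intro INF_lower) auto
    also have "\<dots> \<le> ereal Lg * curve_length ?s"
    proof (rule cl_comp[OF Lg])
      fix s u :: real
      show "norm (g (?s s) - g (?s u)) \<le> Lg * norm (?s s - ?s u)"
        using lipschitz_on_normD[OF assms(3)] by blast
    qed
    also have "\<dots> \<le> ereal Lg * ereal (norm (y - x))"
      by (rule ereal_mult_left_mono[OF cl_seg]) (use Lg in simp)
    finally have dA: "intrinsic_dist A (g x) (g y) \<le> ereal (Lg * norm (y - x))" by simp
    have gA: "g x \<in> A" "g y \<in> A" using assms(2) by auto
    have fin: "intrinsic_dist A (g x) (g y) \<noteq> \<infinity>" using dA by auto
    have "ereal (norm (f (g x) - f (g y))) \<le> ereal Lf * intrinsic_dist A (g x) (g y)"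
      using assms(4) gA fin unfolding intrinsic_lipschitz_def by auto
    also have "\<dots> \<le> ereal Lf * ereal (Lg * norm (y - x))"
      by (rule ereal_mult_left_mono[OF dA]) (use Lf in simp)
    finally show "ereal (norm ((f \<circ> g) x - (f \<circ> g) y)) \<le> ereal (Lf * Lg) * intrinsic_dist UNIV x y"
      using rU by (simp add: mult.assoc)
  qed
qed

end
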